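(* Let $Q$ be a generalized seed of length $s(Q)\le m$ and let $k\le m$. If $Q$ solves the cyclic $(m,k)$-problem, then for every integer $i\ge 0$ the generalized seed $Q_i=[Q,-^{m-s(Q)}]^i$ solves the (linear) $(m(i+1)+s(Q)-1,\,k)$-problem. Conversely, if $i\ge 1$ and $Q_i$ solves the $(m(i+1)+s(Q)-1,\,k)$-problem, then $Q$ solves the cyclic $(m,k)$-problem.
   Context: A generalized seed is a finite word over $\{\#,-\}$ (it may begin or end with the joker $-$); its length is called its span $s(Q)$. A binary word is an $(m,k)$-similarity if it has length $m$ and exactly $k$ zeros. $Q$ matches a binary word $w$ at position $j$ ($1\le j\le |w|-s(Q)+1$) if $w[j+t-1]=1$ for every $t$ with $Q[t]=\#$; $Q$ detects $w$ if it matches at some position. $Q$ solves the (linear) $(m,k)$-problem if it detects every $(m,k)$-similarity; $Q$ solves the cyclic $(m,k)$-problem if for every $(m,k)$-similarity $w$ it detects at least one cyclic rotation of $w$. For words $Q_1,Q_2$ over $\{\#,-\}$ and $i\ge0$, $[Q_1,Q_2]^i$ denotes the word $(Q_1Q_2)^iQ_1$; $-^{n}$ denotes $n$ jokers. *)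

theory Defs
  imports Main
begin

(* Seeds: lists over bool, True = '#', False = '-' (joker).
   Binary words: lists over bool, True = 1, False = 0.
   Positions are 0-based here (paper: 1-based). *)

type_synonym seed = "bool list"
type_synonym bword = "bool list"

definition span :: "seed \<Rightarrow> nat" where
  "span Q = length Q"

definition matches_at :: "seed \<Rightarrow> bword \<Rightarrow> nat \<Rightarrow> bool" where
  "matches_at Q w j \<longleftrightarrow> j + span Q \<le> length w \<and>
     (\<forall>t < span Q. Q ! t \<longrightarrow> w ! (j + t))"

definition detects :: "seed \<Rightarrow> bword \<Rightarrow> bool" where
  "detects Q w \<longleftrightarrow> (\<exists>j. matches_at Q w j)"

definition similarity :: "nat \<Rightarrow> nat \<Rightarrow> bword \<Rightarrow> bool" where
  "similarity m k w \<longleftrightarrow> length w = m \<and> length (filter Not w) = k"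

definition solves :: "seed \<Rightarrow> nat \<Rightarrow> nat \<Rightarrow> bool" where
  "solves Q m k \<longleftrightarrow> (\<forall>w. similarity m k w \<longrightarrow> detects Q w)"

definition solves_cyclic :: "seed \<Rightarrow> nat \<Rightarrow> nat \<Rightarrow> bool" where
  "solves_cyclic Q m k \<longleftrightarrow> (\<forall>w. similarity m k w \<longrightarrow> (\<exists>r. detects Q (rotate r w)))"

definition jokers :: "nat \<Rightarrow> seed" where
  "jokers n = replicate n False"

definition bracket :: "seed \<Rightarrow> seed \<Rightarrow> nat \<Rightarrow> seed" where
  "bracket Q1 Q2 i = concat (replicate i (Q1 @ Q2)) @ Q1"

end

theory Submission
  imports Defs
begin

lemma bracket_Suc: "bracket Q J (Suc i) = (Q @ J) @ bracket Q J i"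
  by (simp add: bracket_def)

lemma bracket_len:
  assumes "length Q \<le> m"
  shows "length (bracket Q (jokers (m - length Q)) i) = m*i + length Q"
  using assms by (induction i) (auto simp: bracket_Suc jokers_def, simp add: bracket_def)

lemma bracket_nth:
  assumes "length Q \<le> m" "0 < m"
  shows "n < m*i + length Q \<Longrightarrow> bracket Q (jokers (m - length Q)) i ! n
            = (n mod m < length Q \<and> Q ! (n mod m))"
proof (induction i arbitrary: n)
  case 0
  then show ?case using assms by (simp add: bracket_def)
next
  case (Suc i)
  show ?case
  proof (cases "n < m")
    case True
    then show ?thesis using assms
      by (auto simp: bracket_Suc nth_append jokers_def)
  next
    case False
    have "n - m < m*i + length Q" using Suc.prems False by simp
    from Suc.IH[OF this] have "bracket Q (jokers (m - length Q)) i ! (n - m)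
        = (n mod m < length Q \<and> Q ! (n mod m))"
      using False by (simp add: le_mod_geq)
    moreover have "length (Q @ jokers (m - length Q)) = m" using assms by (simp add: jokers_def)
    ultimately show ?thesis using False
      by (simp only: bracket_Suc nth_append) simp
  qed
qed

lemma zeros_card: "length (filter Not v) = card {c. c < length v \<and> \<not> v ! c}"
  by (simp add: length_filter_conv_card)

lemma fill:
  "length v = m \<Longrightarrow> length (filter Not v) \<le> k \<Longrightarrow> k \<le> m \<Longrightarrow>
   \<exists>v'. length v' = m \<and> length (filter Not v') = k \<and> (\<forall>c<m. v' ! c \<longrightarrow> v ! c)"
proof (induction "k - length (filter Not v)" arbitrary: v)
  case 0
  then show ?case by (intro exI[of _ v]) auto
next
  case (Suc d)
  have lt: "length (filter Not v) < length v" using Suc by simp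
  obtain c where c: "c < m" "v ! c"
  proof -
    have "\<not> (\<forall>c<m. \<not> v ! c)"
    proof
      assume "\<forall>c<m. \<not> v ! c"
      then have "filter Not v = v" using Suc.prems(1)
        by (auto simp: filter_id_conv in_set_conv_nth)
      then show False using lt by simp
    qed
    then show ?thesis using that by blast
  qed
  define v2 where "v2 = v[c := False]"
  have "{i. i < length v2 \<and> \<not> v2 ! i} = insert c {i. i < length v \<and> \<not> v ! i}"
    using c Suc.prems(1) by (auto simp: v2_def nth_list_update)
  then have z: "length (filter Not v2) = Suc (length (filter Not v))"
    using c by (simp add: zeros_card)
  have "length v2 = m" using Suc.prems(1) by (simp add: v2_def)
  moreover have "length (filter Not v2) \<le> k" using z Suc.hyps(2) by simp
  moreover have "d = k - length (filter Not v2)" using z Suc.hyps(2) by simp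
  ultimately obtain v' where v': "length v' = m" "length (filter Not v') = k"
     "\<forall>c<m. v' ! c \<longrightarrow> v2 ! c"
    using Suc.hyps(1) Suc.prems(3) by blast
  show ?case
  proof (intro exI[of _ v'] conjI allI impI)
    fix x assume x: "x < m" "v' ! x"
    then have "v2 ! x" using v'(3) by blast
    then show "v ! x" using c(2) by (cases "x = c") (auto simp: v2_def)
  qed (use v' in auto)
qed

lemma dir1:
  assumes sm: "length Q \<le> m" and km: "k \<le> m" and s0: "0 < length Q"
    and cyc: "solves_cyclic Q m k"
    and lw: "length w = m * (i + 1) + length Q - 1" and kw: "length (filter Not w) = k"
  shows "detects (bracket Q (jokers (m - length Q)) i) w"
proof -
  define L where "L = m * (i + 1) + length Q - 1"
  have m0: "0 < m" using sm s0 by linarith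
  define v where "v = map (\<lambda>c. \<forall>p<L. p mod m = c \<longrightarrow> w ! p) [0..<m]"
  have lv: "length v = m" by (simp add: v_def)
  have "{c. c < length v \<and> \<not> v ! c} \<subseteq> (\<lambda>p. p mod m) ` {p. p < length w \<and> \<not> w ! p}"
  proof
    fix c assume "c \<in> {c. c < length v \<and> \<not> v ! c}"
    then obtain p where "p < L" "p mod m = c" "\<not> w ! p" by (auto simp: v_def)
    then show "c \<in> (\<lambda>p. p mod m) ` {p. p < length w \<and> \<not> w ! p}"
      using lw L_def by auto
  qed
  then have "length (filter Not v) \<le> card {p. p < length w \<and> \<not> w ! p}"
    unfolding zeros_card
  proof -
    assume h: "{c. c < length v \<and> \<not> v ! c} \<subseteq> (\<lambda>p. p mod m) ` {p. p < length w \<and> \<not> w ! p}"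
    have f: "finite {p. p < length w \<and> \<not> w ! p}" by simp
    have "card {c. c < length v \<and> \<not> v ! c} \<le> card ((\<lambda>p. p mod m) ` {p. p < length w \<and> \<not> w ! p})"
      using h by (intro card_mono) (use f in auto)
    also have "\<dots> \<le> card {p. p < length w \<and> \<not> w ! p}" using f by (rule card_image_le)
    finally show "card {c. c < length v \<and> \<not> v ! c} \<le> card {p. p < length w \<and> \<not> w ! p}" .
  qed
  then have "length (filter Not v) \<le> k" using kw by (simp add: zeros_card)
  from fill[OF lv this km] obtain v' where v': "length v' = m" "length (filter Not v') = k"
    "\<forall>c<m. v' ! c \<longrightarrow> v ! c" by blast
  from cyc v' obtain r where "detects Q (rotate r v')"
    unfolding solves_cyclic_def similarity_def by blast
  then obtain j' where j': "j' + length Q \<le> m" "\<forall>t<length Q. Q ! t \<longrightarrow> rotate r v' ! (j' + t)"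
    unfolding detects_def matches_at_def span_def using v'(1) by auto
  define j where "j = (r + j') mod m"
  have jm: "j < m" using m0 by (simp add: j_def)
  have "matches_at (bracket Q (jokers (m - length Q)) i) w j"
    unfolding matches_at_def span_def
  proof (intro conjI allI impI)
    show "j + length (bracket Q (jokers (m - length Q)) i) \<le> length w"
      using bracket_len[OF sm] jm lw by simp
  next
    fix n assume n: "n < length (bracket Q (jokers (m - length Q)) i)"
      and b: "bracket Q (jokers (m - length Q)) i ! n"
    have n': "n < m * i + length Q" using n bracket_len[OF sm] by simp
    define u where "u = n mod m"
    have u: "u < length Q" "Q ! u" using b bracket_nth[OF sm m0 n'] by (auto simp: u_def)
    have "rotate r v' ! (j' + u) = v' ! ((r + (j' + u)) mod m)"
      using j' u v'(1) by (simp add: nth_rotate)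
    moreover have "rotate r v' ! (j' + u)" using j' u by blast
    ultimately have "v ! ((r + (j' + u)) mod m)" using v'(3) m0 by simp
    then have vv: "\<forall>p<L. p mod m = (r + (j' + u)) mod m \<longrightarrow> w ! p"
      using m0 by (simp add: v_def)
    have "(j + n) mod m = ((r + j') mod m + n) mod m" by (simp add: j_def)
    also have "\<dots> = (r + j' + n) mod m" by (rule mod_add_left_eq)
    also have "\<dots> = (r + j' + n mod m) mod m" by (rule mod_add_right_eq[symmetric])
    also have "\<dots> = (r + (j' + u)) mod m" by (simp add: u_def add.assoc)
    finally have "(j + n) mod m = (r + (j' + u)) mod m" .
    moreover have "j + n < L" using jm n' L_def by simp
    ultimately show "w ! (j + n)" using vv by blast
  qed
  then show ?thesis unfolding detects_def by blast
qed

lemma dir2: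
  assumes sm: "length Q \<le> m" and km: "k \<le> m" and s0: "0 < length Q" and i1: "1 \<le> i"
    and sol: "solves (bracket Q (jokers (m - length Q)) i) (m * (i + 1) + length Q - 1) k"
    and sv: "similarity m k v"
  shows "\<exists>r. detects Q (rotate r v)"
proof -
  define L where "L = m * (i + 1) + length Q - 1"
  have m0: "0 < m" using sm s0 by linarith
  have lv: "length v = m" and kv: "length (filter Not v) = k" using sv by (auto simp: similarity_def)
  have mi: "m \<le> m * i" using i1 by simp
  define w where "w = replicate (m - 1) True @ v @ replicate (L - (2*m - 1)) True"
  have "length w = (m - 1) + m + (L - (2*m - 1))" by (simp add: w_def lv)
  also have "\<dots> = L"
  proof -
    have "m * (i + 1) = m * i + m" by simp
    then show ?thesis using mi L_def m0 s0 by linarith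
  qed
  finally have lw: "length w = L" .
  have "length (filter Not w) = k" using kv by (simp add: w_def)
  then have "detects (bracket Q (jokers (m - length Q)) i) w"
    using sol lw L_def by (simp add: solves_def similarity_def)
  then obtain j where mj: "j + (m * i + length Q) \<le> L"
    "\<forall>n<m * i + length Q. bracket Q (jokers (m - length Q)) i ! n \<longrightarrow> w ! (j + n)"
    unfolding detects_def matches_at_def span_def using bracket_len[OF sm] lw by auto
  have jm: "j < m" using mj(1) L_def m0 s0 by simp
  have "matches_at Q (rotate (j + 1) v) 0"
    unfolding matches_at_def span_def
  proof (intro conjI allI impI)
    show "0 + length Q \<le> length (rotate (j + 1) v)" using lv sm by simp
  next
    fix u assume u: "u < length Q" "Q ! u"
    have um: "u < m" using u sm by simp
    obtain t where t: "t \<le> 1" "m - 1 + (j + u + 1) mod m = j + t * m + u"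
    proof (cases "j + u + 1 < m")
      case True
      then show ?thesis using that[of 1] m0 by simp
    next
      case False
      then have "(j + u + 1) mod m = j + u + 1 - m" using jm um
        by (simp add: le_mod_geq)
      then show ?thesis using that[of 0] False m0 by simp
    qed
    define p where "p = m - 1 + (j + u + 1) mod m"
    have "t * m \<le> m * i" using t(1) mi by (cases t) auto
    then have tm: "t * m + u < m * i + length Q" using u(1) by linarith
    have "(t * m + u) mod m = u" using um by simp
    then have "bracket Q (jokers (m - length Q)) i ! (t * m + u)"
      using bracket_nth[OF sm m0 tm] u by simp
    then have "w ! p" using mj(2) tm t(2) p_def by (simp add: add.assoc)
    moreover have "w ! p = v ! ((j + u + 1) mod m)"
    proof -
      have x: "(j + u + 1) mod m < length v" using m0 lv by simp
      have "w ! p = (v @ replicate (L - (2*m - 1)) True) ! ((j + u + 1) mod m)"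
        unfolding w_def p_def using nth_append_length_plus[of "replicate (m - 1) True"]
        by (metis length_replicate)
      also have "\<dots> = v ! ((j + u + 1) mod m)" using x by (simp only: nth_append if_True)
      finally show ?thesis .
    qed
    moreover have "rotate (j + 1) v ! (0 + u) = v ! ((j + 1 + u) mod m)"
      using um lv nth_rotate[of u v "j + 1"] by simp
    ultimately show "rotate (j + 1) v ! (0 + u)" by (simp add: add.commute add.left_commute)
  qed
  then show ?thesis unfolding detects_def by blast
qed

lemma jok_detects: "n \<le> length w \<Longrightarrow> detects (jokers n) w"
  unfolding detects_def matches_at_def span_def jokers_def by (intro exI[of _ 0]) auto

lemma empty_detects: "detects [] w"
  unfolding detects_def matches_at_def span_def by auto

theorem mainTheorem6:
  fixes Q :: seed and m k :: nat
  assumes "span Q \<le> m" and "k \<le> m"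
  shows "(solves_cyclic Q m k \<longrightarrow>
            (\<forall>i. solves (bracket Q (jokers (m - span Q)) i) (m * (i + 1) + span Q - 1) k))
       \<and> (\<forall>i\<ge>1. solves (bracket Q (jokers (m - span Q)) i) (m * (i + 1) + span Q - 1) k
            \<longrightarrow> solves_cyclic Q m k)"
proof (cases "Q = []")
  case True
  have bj: "bracket [] (jokers m) i = jokers (m * i)" for i
    by (induction i) (auto simp: bracket_def jokers_def replicate_add)
  have "m * i \<le> m * (i + 1) - 1" for i by (cases m) auto
  then have "\<forall>i. solves (bracket Q (jokers (m - span Q)) i) (m * (i + 1) + span Q - 1) k"
    unfolding True solves_def similarity_def span_def by (auto simp: bj intro: jok_detects)
  moreover have "solves_cyclic Q m k"
    unfolding True solves_cyclic_def by (simp add: empty_detects)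
  ultimately show ?thesis by blast
next
  case False
  then have s0: "0 < length Q" by simp
  have sm: "length Q \<le> m" using assms(1) by (simp add: span_def)
  have A: "solves_cyclic Q m k \<longrightarrow>
            (\<forall>i. solves (bracket Q (jokers (m - span Q)) i) (m * (i + 1) + span Q - 1) k)"
  proof (intro impI allI)
    fix i assume c: "solves_cyclic Q m k"
    show "solves (bracket Q (jokers (m - span Q)) i) (m * (i + 1) + span Q - 1) k"
      unfolding solves_def similarity_def span_def
    proof (intro allI impI)
      fix w assume "length w = m * (i + 1) + length Q - 1 \<and> length (filter Not w) = k"
      then show "detects (bracket Q (jokers (m - length Q)) i) w"
        using dir1[OF sm assms(2) s0 c] by blast
    qed
  qed
  have B: "\<forall>i\<ge>1. solves (bracket Q (jokers (m - span Q)) i) (m * (i + 1) + span Q - 1) k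
            \<longrightarrow> solves_cyclic Q m k"
  proof (intro allI impI)
    fix i :: nat assume i: "1 \<le> i"
      and so: "solves (bracket Q (jokers (m - span Q)) i) (m * (i + 1) + span Q - 1) k"
    show "solves_cyclic Q m k" unfolding solves_cyclic_def
    proof (intro allI impI)
      fix v assume "similarity m k v"
      then show "\<exists>r. detects Q (rotate r v)"
        using dir2[OF sm assms(2) s0 i] so unfolding span_def by blast
    qed
  qed
  show ?thesis using A B by blast
qed

end
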